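(* Consider a transformer with $L$ layers and $H$ attention heads per layer, each head of dimension $d_h$. For a prompt $\rho$ of length $|\rho|$, let the query position be the last position, and for layer $\ell$ and head $h$ let $$\alpha_{ti}^{(\ell,h)}=\frac{\exp\left(q_t^{(\ell,h)\top}k_i^{(\ell,h)}/\sqrt{d_h}\right)}{\sum_{j=1}^{|\rho|}\exp\left(q_t^{(\ell,h)\top}k_j^{(\ell,h)}/\sqrt{d_h}\right)}$$ be the attention weights. Assume that for every prompt, every layer $\ell$, head $h$ and position $j$, $\|q_t^{(\ell,h)}\|\le Q_{\ell,h}$ and $\|k_j^{(\ell,h)}\|\le K_{\ell,h}$. Let $\mathsf{R}$ be a task-relevant set of $m$ token positions and define the averaged attention mass $$A(\rho)=\frac{1}{LH}\sum_{\ell=1}^{L}\sum_{h=1}^{H}\sum_{i\in\mathsf{R}}\alpha_{ti}^{(\ell,h)}.$$ Suppose feasibility of a prompt requires $A(\rho)\ge\tau$ for a given $\tau>0$, and let $|\rho|_{\mathrm{sat}}$ denote the supremum of lengths $|\rho|$ of prompts satisfying this requirement. Let $|\rho|_{\mathrm{feasible}}>0$ be the hardware-feasible prompt length. Then $$\Delta_{\rho}:=\frac{|\rho|_{\mathrm{sat}}}{|\rho|_{\mathrm{feasible}}}\le\frac{m}{\tau|\rho|_{\mathrm{feasible}}}\exp\left(\max_{\ell,h}\frac{2Q_{\ell,h}K_{\ell,h}}{\sqrt{d_h}}\right).$$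
   Context: $|\rho|_{\mathrm{feasible}}$ is an arbitrary positive number (in the paper, the maximal prompt length allowed by KV-cache memory); $|\rho|_{\mathrm{sat}}$ is the saturation length, i.e. the largest prompt length for which the attention-mass requirement $A(\rho)\ge\tau$ can hold. *)

theory Defs
  imports "HOL-Analysis.Analysis"
begin

definition attn_weight :: "real \<Rightarrow> 'v::real_inner \<Rightarrow> (nat \<Rightarrow> 'v) \<Rightarrow> nat \<Rightarrow> nat \<Rightarrow> real" where
  "attn_weight dh q k n i =
     exp (inner q (k i) / sqrt dh) / (\<Sum>j=1..n. exp (inner q (k j) / sqrt dh))"

text \<open>Averaged attention mass on the relevant set R for one prompt of length n:
q l h is the query (last position) of layer l, head h; k l h j the key at position j.\<close>
definition attn_mass :: "nat \<Rightarrow> nat \<Rightarrow> real \<Rightarrow> (nat \<Rightarrow> nat \<Rightarrow> 'v::real_inner)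
    \<Rightarrow> (nat \<Rightarrow> nat \<Rightarrow> nat \<Rightarrow> 'v) \<Rightarrow> nat \<Rightarrow> nat set \<Rightarrow> real" where
  "attn_mass L H dh q k n R =
     (1 / (real L * real H)) *
       (\<Sum>l=1..L. \<Sum>h=1..H. \<Sum>i\<in>R. attn_weight dh (q l h) (k l h) n i)"

definition sat_length :: "('p \<Rightarrow> nat) \<Rightarrow> ('p \<Rightarrow> real) \<Rightarrow> real \<Rightarrow> real" where
  "sat_length len A \<tau> =
     (if {p. \<tau> \<le> A p} = {} then 0 else Sup {real (len p) | p. \<tau> \<le> A p})"

end

theory Submission
  imports Defs
begin

lemma weight_bound:
  fixes q :: "'v::real_inner"
  assumes n: "n \<ge> 1" and i: "i \<in> {1..n}"
    and b: "\<And>j. j \<in> {1..n} \<Longrightarrow> \<bar>inner q (k j) / sqrt dh\<bar> \<le> c"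
  shows "attn_weight dh q k n i \<le> exp (2 * c) / real n"
proof -
  have num: "exp (inner q (k i) / sqrt dh) \<le> exp c"
    using b[OF i] abs_le_D1[of "inner q (k i) / sqrt dh" c] by simp
  have "(\<Sum>j=1..n. exp (- c)) \<le> (\<Sum>j=1..n. exp (inner q (k j) / sqrt dh))"
    proof (rule sum_mono)
    fix j assume "j \<in> {1..n}"
    from b[OF this] have "- c \<le> inner q (k j) / sqrt dh" by linarith
    thus "exp (- c) \<le> exp (inner q (k j) / sqrt dh)" by simp
  qed
  hence den: "real n * exp (- c) \<le> (\<Sum>j=1..n. exp (inner q (k j) / sqrt dh))" by simp
  have pos: "real n * exp (- c) > 0" using n by simp
  have "attn_weight dh q k n i \<le> exp c / (real n * exp (- c))"
    unfolding attn_weight_def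
    by (rule frac_le) (use num den pos in auto)
  also have "\<dots> = exp (2 * c) / real n"
    using n by (simp add: exp_minus field_simps flip: exp_add)
  finally show ?thesis .
qed

theorem mainTheorem3:
  fixes L H m :: nat
    and len :: "'p \<Rightarrow> nat"
    and q :: "'p \<Rightarrow> nat \<Rightarrow> nat \<Rightarrow> 'v::euclidean_space"
    and k :: "'p \<Rightarrow> nat \<Rightarrow> nat \<Rightarrow> nat \<Rightarrow> 'v"
    and R :: "'p \<Rightarrow> nat set"
    and Q K :: "nat \<Rightarrow> nat \<Rightarrow> real"
    and \<tau> rho_feasible :: real
  assumes "L \<ge> 1" and "H \<ge> 1"
    and "\<And>p. R p \<subseteq> {1..len p} \<and> card (R p) = m"
    and "\<And>p l h. l \<in> {1..L} \<Longrightarrow> h \<in> {1..H} \<Longrightarrow> norm (q p l h) \<le> Q l h"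
    and "\<And>p l h j. l \<in> {1..L} \<Longrightarrow> h \<in> {1..H} \<Longrightarrow> j \<in> {1..len p} \<Longrightarrow> norm (k p l h j) \<le> K l h"
    and "\<tau> > 0" and "rho_feasible > 0"
  shows "sat_length len (\<lambda>p. attn_mass L H (real DIM('v)) (q p) (k p) (len p) (R p)) \<tau> / rho_feasible
    \<le> real m / (\<tau> * rho_feasible) *
       exp (Max {2 * Q l h * K l h / sqrt (real DIM('v)) | l h. l \<in> {1..L} \<and> h \<in> {1..H}})"
proof -
  note L = assms(1) and H = assms(2) and RR = assms(3) and Qb = assms(4) and Kb = assms(5)
    and tau = assms(6) and rf = assms(7)
  define S where "S = {2 * Q l h * K l h / sqrt (real DIM('v)) | l h. l \<in> {1..L} \<and> h \<in> {1..H}}"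
  define M where "M = Max S"
  define A where "A = (\<lambda>p. attn_mass L H (real DIM('v)) (q p) (k p) (len p) (R p))"
  have Sfin: "finite S"
  proof -
    have "S = (\<lambda>(l,h). 2 * Q l h * K l h / sqrt (real DIM('v))) ` ({1..L} \<times> {1..H})"
      unfolding S_def by force
    thus ?thesis by simp
  qed
  have SM: "2 * Q l h * K l h / sqrt (real DIM('v)) \<le> M" if "l \<in> {1..L}" "h \<in> {1..H}" for l h
    unfolding M_def by (rule Max_ge[OF Sfin]) (use that in \<open>auto simp: S_def\<close>)
  define s where "s = sqrt (real DIM('v))"
  have spos: "s > 0" unfolding s_def by simp
  have key: "real (len p) \<le> real m * exp M / \<tau>" if "\<tau> \<le> A p" for p
  proof (cases "len p = 0")
    case True
    then have "R p = {}" using RR[of p] by auto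
    then have "A p = 0" unfolding A_def attn_mass_def by simp
    with that tau show ?thesis by simp
  next
    case False
    define n where "n = len p"
    have n1: "n \<ge> 1" using False n_def by simp
    have wb: "attn_weight (real DIM('v)) (q p l h) (k p l h) n i \<le> exp M / real n"
      if l: "l \<in> {1..L}" and h: "h \<in> {1..H}" and i: "i \<in> R p" for l h i
    proof -
      define c where "c = Q l h * K l h / s"
      have iin: "i \<in> {1..n}" using RR[of p] i n_def by auto
      have "attn_weight (real DIM('v)) (q p l h) (k p l h) n i \<le> exp (2 * c) / real n"
      proof (rule weight_bound[OF n1 iin])
        fix j assume j: "j \<in> {1..n}"
        have "\<bar>inner (q p l h) (k p l h j)\<bar> \<le> norm (q p l h) * norm (k p l h j)"
          by (rule Cauchy_Schwarz_ineq2)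
        also have "\<dots> \<le> Q l h * K l h"
          using Qb[OF l h, of p] Kb[OF l h, of j p] j n_def
          by (intro mult_mono) (auto intro: order_trans[OF norm_ge_zero])
        finally have "\<bar>inner (q p l h) (k p l h j)\<bar> / s \<le> c"
          unfolding c_def using spos by (simp add: divide_right_mono)
        thus "\<bar>inner (q p l h) (k p l h j) / sqrt (real DIM('v))\<bar> \<le> c"
          using spos by (simp add: s_def)
      qed
      also have "\<dots> \<le> exp M / real n"
        using SM[OF l h] n1 unfolding c_def s_def
        by (intro divide_right_mono) auto
      finally show ?thesis .
    qed
    have finR: "finite (R p)" using RR[of p] finite_subset by blast
    have "(\<Sum>l=1..L. \<Sum>h=1..H. \<Sum>i\<in>R p. attn_weight (real DIM('v)) (q p l h) (k p l h) n i)
        \<le> (\<Sum>l=1..L. \<Sum>h=1..H. \<Sum>i\<in>R p. exp M / real n)"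
      by (intro sum_mono) (use wb in auto)
    also have "\<dots> = real L * real H * (real m * exp M / real n)"
      using RR[of p] by simp
    finally have "A p \<le> (1 / (real L * real H)) * (real L * real H * (real m * exp M / real n))"
      unfolding A_def attn_mass_def n_def[symmetric]
      using L H by (intro mult_left_mono) auto
    also have "\<dots> = real m * exp M / real n" using L H by simp
    finally have "\<tau> \<le> real m * exp M / real n" using that by linarith
    hence "\<tau> * real n \<le> real m * exp M" using n1 by (simp add: field_simps)
    thus ?thesis using tau n_def by (simp add: field_simps)
  qed
  have sat: "sat_length len A \<tau> \<le> real m * exp M / \<tau>"
  proof (cases "{p. \<tau> \<le> A p} = {}")
    case True
    then show ?thesis unfolding sat_length_def using tau by simp
  next
    case False
    then have "Sup {real (len p) | p. \<tau> \<le> A p} \<le> real m * exp M / \<tau>"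
      by (intro cSup_least) (use key in auto)
    with False show ?thesis unfolding sat_length_def by (simp only: if_False)
  qed
  have "sat_length len A \<tau> / rho_feasible \<le> (real m * exp M / \<tau>) / rho_feasible"
    by (rule divide_right_mono[OF sat]) (use rf in simp)
  also have "\<dots> = real m / (\<tau> * rho_feasible) * exp M" by simp
  finally show ?thesis unfolding A_def M_def S_def .
qed

end
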